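(* Let $A$ be a basic connected finite dimensional algebra over an algebraically closed field $k$ with ordinary quiver $Q$ without oriented cycles, and let $\nu\colon kQ\twoheadrightarrow A$ be a presentation. Then $\mathsf{Im}(\theta_\nu)\subseteq\mathsf{HH}^1(A)$ is diagonalizable.
   Context: Fix a complete set $e_1,\dots,e_n$ of primitive orthogonal idempotents of $A$ indexed by $Q_0=\{1,\dots,n\}$, $E=\bigoplus ke_i$, $\mathfrak r$ the radical. A presentation is a surjective algebra map $\nu\colon kQ\twoheadrightarrow A$ with admissible kernel ($(kQ^+)^N\subseteq\mathsf{Ker}\,\nu\subseteq(kQ^+)^2$ for some $N\ge2$, $kQ^+$ the arrow ideal) and $\nu(e_i)=e_i$. $\mathsf{HH}^1(A)=Der_0(A)/Int_0(A)$, with $Der_0(A)$ the derivations vanishing on all $e_i$ (commutator bracket) and $Int_0(A)=\{a\mapsto ea-ae\mid e\in E\}$. Walks: paths in $Q$ with formal inverse arrows allowed. For $I=\mathsf{Ker}\,\nu$, the homotopy relation $\sim_I$ is the smallest equivalence relation on walks with $\alpha\alpha^{-1}\sim_I e_y$, $\alpha^{-1}\alpha\sim_I e_x$ for arrows $\alpha\colon x\to y$, compatible with concatenation, and identifying two paths occurring with nonzero coefficient in a same minimal relation of $I$ (a nonzero $\sum t_iu_i\in I$, $t_i\neq0$, distinct paths $u_i$, no nonempty proper subsum in $I$). $\pi_1(Q,I)$ is the group of classes of closed walks at a fixed vertex $x_0$. Fix a maximal tree $T$ of $Q$, $\gamma_x$ the minimal walk in $T$ from $x_0$ to $x$. For a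 group homomorphism $f\colon\pi_1(Q,I)\to k^+$, $\theta_\nu(f)$ is the class of the derivation $\tilde f$ with $\tilde f(\nu(u))=f([\gamma_y^{-1}u\gamma_x]_I)\nu(u)$ for paths $u$ from $x$ to $y$; $\theta_\nu\colon\mathsf{Hom}(\pi_1(Q,I),k^+)\to\mathsf{HH}^1(A)$. A basis of $A$ is a $k$-basis $\mathcal B\subseteq\bigcup_{i,j}e_jAe_i$ containing $e_1,\dots,e_n$ with the other elements in $\mathfrak r$. A subset $D\subseteq\mathsf{HH}^1(A)$ is diagonalizable if there is a basis $\mathcal B$ of $A$ such that each $f\in D$ is represented by a derivation diagonal with respect to $\mathcal B$. *)

theory Defs
  imports "HOL-Computational_Algebra.Polynomial" "HOL-Algebra.Group"
begin

text \<open>A path is a triple (x, arrows in travel order, y);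
  the trivial path e_x is (x, [], x).\<close>

type_synonym ('v,'e) path = "'v \<times> 'e list \<times> 'v"

fun is_path :: "('e \<Rightarrow> 'v) \<Rightarrow> ('e \<Rightarrow> 'v) \<Rightarrow> ('v,'e) path \<Rightarrow> bool" where
  "is_path src tgt (x, [], y) = (x = y)"
| "is_path src tgt (x, a # as, y) = (src a = x \<and> is_path src tgt (tgt a, as, y))"

definition path_len :: "('v,'e) path \<Rightarrow> nat" where
  "path_len p = length (fst (snd p))"

definition no_oriented_cycles :: "('e \<Rightarrow> 'v) \<Rightarrow> ('e \<Rightarrow> 'v) \<Rightarrow> bool" where
  "no_oriented_cycles src tgt \<longleftrightarrow>
     \<not> (\<exists>x as. as \<noteq> [] \<and> is_path src tgt (x, as, x))"

text \<open>Walks: a step is (arrow, True) for the arrow and (arrow, False) for its formal inverse.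
  A walk is (start, steps in travel order, end).\<close>

type_synonym ('v,'e) walk = "'v \<times> ('e \<times> bool) list \<times> 'v"

definition step_src :: "('e \<Rightarrow> 'v) \<Rightarrow> ('e \<Rightarrow> 'v) \<Rightarrow> 'e \<times> bool \<Rightarrow> 'v" where
  "step_src src tgt st = (if snd st then src (fst st) else tgt (fst st))"

definition step_tgt :: "('e \<Rightarrow> 'v) \<Rightarrow> ('e \<Rightarrow> 'v) \<Rightarrow> 'e \<times> bool \<Rightarrow> 'v" where
  "step_tgt src tgt st = (if snd st then tgt (fst st) else src (fst st))"

fun is_walk :: "('e \<Rightarrow> 'v) \<Rightarrow> ('e \<Rightarrow> 'v) \<Rightarrow> ('v,'e) walk \<Rightarrow> bool" where
  "is_walk src tgt (x, [], y) = (x = y)"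
| "is_walk src tgt (x, st # sts, y) =
     (step_src src tgt st = x \<and> is_walk src tgt (step_tgt src tgt st, sts, y))"

definition wstart :: "('v,'e) walk \<Rightarrow> 'v" where "wstart w = fst w"
definition wend :: "('v,'e) walk \<Rightarrow> 'v" where "wend w = snd (snd w)"

definition wcat :: "('v,'e) walk \<Rightarrow> ('v,'e) walk \<Rightarrow> ('v,'e) walk" where
  "wcat w1 w2 = (fst w1, fst (snd w1) @ fst (snd w2), snd (snd w2))"

definition winv :: "('v,'e) walk \<Rightarrow> ('v,'e) walk" where
  "winv w = (snd (snd w), rev (map (\<lambda>(a,b). (a, \<not> b)) (fst (snd w))), fst w)"

definition path_walk :: "('v,'e) path \<Rightarrow> ('v,'e) walk" where
  "path_walk p = (fst p, map (\<lambda>a. (a, True)) (fst (snd p)), snd (snd p))"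

definition quiver_connected :: "('e \<Rightarrow> 'v) \<Rightarrow> ('e \<Rightarrow> 'v) \<Rightarrow> bool" where
  "quiver_connected src tgt \<longleftrightarrow> (\<forall>x y. \<exists>sts. is_walk src tgt (x, sts, y))"

definition walk_in :: "('e \<Rightarrow> 'v) \<Rightarrow> ('e \<Rightarrow> 'v) \<Rightarrow> 'e set \<Rightarrow> ('v,'e) walk \<Rightarrow> bool" where
  "walk_in src tgt T w \<longleftrightarrow> is_walk src tgt w \<and> (\<forall>st \<in> set (fst (snd w)). fst st \<in> T)"

definition reduced_walk :: "('v,'e) walk \<Rightarrow> bool" where
  "reduced_walk w \<longleftrightarrow> (\<forall>i. Suc i < length (fst (snd w)) \<longrightarrow>
      \<not> (fst (fst (snd w) ! i) = fst (fst (snd w) ! Suc i) \<and>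
         snd (fst (snd w) ! i) \<noteq> snd (fst (snd w) ! Suc i)))"

definition arrow_forest :: "('e \<Rightarrow> 'v) \<Rightarrow> ('e \<Rightarrow> 'v) \<Rightarrow> 'e set \<Rightarrow> bool" where
  "arrow_forest src tgt T \<longleftrightarrow>
     \<not> (\<exists>w. walk_in src tgt T w \<and> wstart w = wend w \<and> fst (snd w) \<noteq> [] \<and> reduced_walk w)"

definition maximal_tree :: "('e \<Rightarrow> 'v) \<Rightarrow> ('e \<Rightarrow> 'v) \<Rightarrow> 'e set \<Rightarrow> bool" where
  "maximal_tree src tgt T \<longleftrightarrow> arrow_forest src tgt T \<and>
     (\<forall>T'. T \<subset> T' \<longrightarrow> \<not> arrow_forest src tgt T')"

definition tree_walks :: "('e \<Rightarrow> 'v) \<Rightarrow> ('e \<Rightarrow> 'v) \<Rightarrow> 'e set \<Rightarrow> 'v \<Rightarrow> ('v \<Rightarrow> ('v,'e) walk) \<Rightarrow> bool" where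
  "tree_walks src tgt T x0 \<gamma> \<longleftrightarrow> (\<forall>x. walk_in src tgt T (\<gamma> x) \<and> wstart (\<gamma> x) = x0 \<and> wend (\<gamma> x) = x \<and>
      (\<forall>w. walk_in src tgt T w \<and> wstart w = x0 \<and> wend w = x \<longrightarrow>
           length (fst (snd (\<gamma> x))) \<le> length (fst (snd w))))"

definition kQ :: "('e \<Rightarrow> 'v) \<Rightarrow> ('e \<Rightarrow> 'v) \<Rightarrow> (('v,'e) path \<Rightarrow> 'k::zero) set" where
  "kQ src tgt = {a. finite {p. a p \<noteq> 0} \<and> (\<forall>p. \<not> is_path src tgt p \<longrightarrow> a p = 0)}"

definition psupp :: "(('v,'e) path \<Rightarrow> 'k::zero) \<Rightarrow> ('v,'e) path set" where
  "psupp a = {p. a p \<noteq> 0}"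

text \<open>Multiplication of kQ (functional convention: for paths u, v, the product u v is
  "first v, then u").\<close>
definition kQ_mult :: "('e \<Rightarrow> 'v) \<Rightarrow> ('e \<Rightarrow> 'v) \<Rightarrow> (('v,'e) path \<Rightarrow> 'k::comm_ring_1) \<Rightarrow>
     (('v,'e) path \<Rightarrow> 'k) \<Rightarrow> ('v,'e) path \<Rightarrow> 'k" where
  "kQ_mult src tgt a b p = (case p of (x, as, y) \<Rightarrow>
     (\<Sum>i\<in>{0..length as}.
        (let z = (if i = 0 then x else tgt (as ! (i - 1))) in
          b (x, take i as, z) * a (z, drop i as, y))))"

definition kQ_one :: "('v,'e) path \<Rightarrow> 'k::comm_ring_1" where
  "kQ_one p = (if fst (snd p) = [] \<and> fst p = snd (snd p) then 1 else 0)"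

definition pind :: "('v,'e) path \<Rightarrow> ('v,'e) path \<Rightarrow> 'k::comm_ring_1" where
  "pind u p = (if p = u then 1 else 0)"

definition arrow_ideal_pow :: "('e \<Rightarrow> 'v) \<Rightarrow> ('e \<Rightarrow> 'v) \<Rightarrow> nat \<Rightarrow> (('v,'e) path \<Rightarrow> 'k::comm_ring_1) set" where
  "arrow_ideal_pow src tgt N = {a \<in> kQ src tgt. \<forall>p. path_len p < N \<longrightarrow> a p = 0}"

definition admissible_ideal :: "('e \<Rightarrow> 'v) \<Rightarrow> ('e \<Rightarrow> 'v) \<Rightarrow> (('v,'e) path \<Rightarrow> 'k::comm_ring_1) set \<Rightarrow> bool" where
  "admissible_ideal src tgt I \<longleftrightarrow>
     (\<exists>N\<ge>2. arrow_ideal_pow src tgt N \<subseteq> I) \<and> I \<subseteq> arrow_ideal_pow src tgt 2"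

definition minimal_relation :: "(('v,'e) path \<Rightarrow> 'k::comm_ring_1) set \<Rightarrow> (('v,'e) path \<Rightarrow> 'k) \<Rightarrow> bool" where
  "minimal_relation I \<rho> \<longleftrightarrow> \<rho> \<in> I \<and> \<rho> \<noteq> (\<lambda>_. 0) \<and>
     (\<forall>S. S \<noteq> {} \<and> S \<subset> psupp \<rho> \<longrightarrow> (\<lambda>p. if p \<in> S then \<rho> p else 0) \<notin> I)"

inductive htpy :: "('e \<Rightarrow> 'v) \<Rightarrow> ('e \<Rightarrow> 'v) \<Rightarrow> (('v,'e) path \<Rightarrow> 'k::comm_ring_1) set \<Rightarrow>
    ('v,'e) walk \<Rightarrow> ('v,'e) walk \<Rightarrow> bool"
  for src tgt I where
  htpy_refl: "is_walk src tgt w \<Longrightarrow> htpy src tgt I w w"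
| htpy_sym: "htpy src tgt I w w' \<Longrightarrow> htpy src tgt I w' w"
| htpy_trans: "htpy src tgt I w w' \<Longrightarrow> htpy src tgt I w' w'' \<Longrightarrow> htpy src tgt I w w''"
| htpy_cancel_tgt: "htpy src tgt I (tgt \<alpha>, [(\<alpha>, False), (\<alpha>, True)], tgt \<alpha>) (tgt \<alpha>, [], tgt \<alpha>)"
| htpy_cancel_src: "htpy src tgt I (src \<alpha>, [(\<alpha>, True), (\<alpha>, False)], src \<alpha>) (src \<alpha>, [], src \<alpha>)"
| htpy_rel: "minimal_relation I \<rho> \<Longrightarrow> \<rho> u \<noteq> 0 \<Longrightarrow> \<rho> u' \<noteq> 0 \<Longrightarrow>
     is_path src tgt u \<Longrightarrow> is_path src tgt u' \<Longrightarrow>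
     htpy src tgt I (path_walk u) (path_walk u')"
| htpy_cat_left: "htpy src tgt I w w' \<Longrightarrow> is_walk src tgt v \<Longrightarrow> wend v = wstart w \<Longrightarrow>
     htpy src tgt I (wcat v w) (wcat v w')"
| htpy_cat_right: "htpy src tgt I w w' \<Longrightarrow> is_walk src tgt v \<Longrightarrow> wend w = wstart v \<Longrightarrow>
     htpy src tgt I (wcat w v) (wcat w' v)"

definition htpy_class :: "('e \<Rightarrow> 'v) \<Rightarrow> ('e \<Rightarrow> 'v) \<Rightarrow> (('v,'e) path \<Rightarrow> 'k::comm_ring_1) set \<Rightarrow>
    ('v,'e) walk \<Rightarrow> ('v,'e) walk set" where
  "htpy_class src tgt I w = {w'. htpy src tgt I w w'}"

text \<open>pi_1(Q,I) at x0: classes of closed walks at x0; the product [w][w'] = [w w'] where,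
  in the functional convention, w w' means first w', then w.\<close>
definition pi1 :: "('e \<Rightarrow> 'v) \<Rightarrow> ('e \<Rightarrow> 'v) \<Rightarrow> (('v,'e) path \<Rightarrow> 'k::comm_ring_1) set \<Rightarrow> 'v \<Rightarrow>
    ('v,'e) walk set monoid" where
  "pi1 src tgt I x0 =
    \<lparr>carrier = htpy_class src tgt I ` {w. is_walk src tgt w \<and> wstart w = x0 \<and> wend w = x0},
     monoid.mult = (\<lambda>C D. {w. \<exists>c\<in>C. \<exists>d\<in>D. htpy src tgt I (wcat d c) w}),
     one = htpy_class src tgt I (x0, [], x0)\<rparr>"

definition kplus :: "'k::comm_ring_1 monoid" where
  "kplus = \<lparr>carrier = UNIV, monoid.mult = (+), one = 0\<rparr>"

definition k_algebra :: "('k::field \<Rightarrow> 'a::ring_1 \<Rightarrow> 'a) \<Rightarrow> bool" where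
  "k_algebra sc \<longleftrightarrow> vector_space sc \<and>
     (\<forall>c x y. sc c (x * y) = sc c x * y \<and> sc c (x * y) = x * sc c y)"

definition finite_dimensional :: "('k::field \<Rightarrow> 'a::ring_1 \<Rightarrow> 'a) \<Rightarrow> bool" where
  "finite_dimensional sc \<longleftrightarrow> (\<exists>F. finite F \<and> module.span sc F = UNIV)"

definition connected_algebra :: "'a::ring_1 itself \<Rightarrow> bool" where
  "connected_algebra _ \<longleftrightarrow>
     (\<forall>c::'a. c * c = c \<and> (\<forall>x. c * x = x * c) \<longrightarrow> c = 0 \<or> c = 1)"

definition left_ideal :: "'a::ring_1 set \<Rightarrow> bool" where
  "left_ideal L \<longleftrightarrow> 0 \<in> L \<and> (\<forall>x\<in>L. \<forall>y\<in>L. x + y \<in> L) \<and> (\<forall>x\<in>L. - x \<in> L) \<and>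
     (\<forall>a x. x \<in> L \<longrightarrow> a * x \<in> L)"

definition maximal_left_ideal :: "'a::ring_1 set \<Rightarrow> bool" where
  "maximal_left_ideal L \<longleftrightarrow> left_ideal L \<and> L \<noteq> UNIV \<and>
     (\<forall>L'. left_ideal L' \<and> L \<subseteq> L' \<longrightarrow> L' = L \<or> L' = UNIV)"

definition jacobson_radical :: "'a::ring_1 set" where
  "jacobson_radical = \<Inter> {L. maximal_left_ideal L}"

definition algebra_map_kQ :: "('e \<Rightarrow> 'v::finite) \<Rightarrow> ('e \<Rightarrow> 'v) \<Rightarrow> ('k::field \<Rightarrow> 'a::ring_1 \<Rightarrow> 'a) \<Rightarrow>
    ((('v,'e) path \<Rightarrow> 'k) \<Rightarrow> 'a) \<Rightarrow> bool" where
  "algebra_map_kQ src tgt sc \<nu> \<longleftrightarrow>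
     (\<forall>a\<in>kQ src tgt. \<forall>b\<in>kQ src tgt. \<nu> (\<lambda>p. a p + b p) = \<nu> a + \<nu> b) \<and>
     (\<forall>c. \<forall>a\<in>kQ src tgt. \<nu> (\<lambda>p. c * a p) = sc c (\<nu> a)) \<and>
     (\<forall>a\<in>kQ src tgt. \<forall>b\<in>kQ src tgt. \<nu> (kQ_mult src tgt a b) = \<nu> a * \<nu> b) \<and>
     \<nu> kQ_one = 1"

text \<open>A presentation: surjective algebra map kQ -> A with admissible kernel; the idempotents
  e_i of A are identified with nu(e_i).\<close>
definition presentation :: "('e \<Rightarrow> 'v::finite) \<Rightarrow> ('e \<Rightarrow> 'v) \<Rightarrow> ('k::field \<Rightarrow> 'a::ring_1 \<Rightarrow> 'a) \<Rightarrow>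
    ((('v,'e) path \<Rightarrow> 'k) \<Rightarrow> 'a) \<Rightarrow> bool" where
  "presentation src tgt sc \<nu> \<longleftrightarrow> algebra_map_kQ src tgt sc \<nu> \<and>
     \<nu> ` kQ src tgt = UNIV \<and>
     admissible_ideal src tgt {a \<in> kQ src tgt. \<nu> a = 0}"

definition ker :: "('e \<Rightarrow> 'v) \<Rightarrow> ('e \<Rightarrow> 'v) \<Rightarrow> ((('v,'e) path \<Rightarrow> 'k::field) \<Rightarrow> 'a::ring_1) \<Rightarrow>
    (('v,'e) path \<Rightarrow> 'k) set" where
  "ker src tgt \<nu> = {a \<in> kQ src tgt. \<nu> a = 0}"

definition idemp :: "((('v,'e) path \<Rightarrow> 'k::field) \<Rightarrow> 'a::ring_1) \<Rightarrow> 'v \<Rightarrow> 'a" where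
  "idemp \<nu> x = \<nu> (pind (x, [], x))"

definition Der0 :: "('k::field \<Rightarrow> 'a::ring_1 \<Rightarrow> 'a) \<Rightarrow> ((('v,'e) path \<Rightarrow> 'k) \<Rightarrow> 'a) \<Rightarrow> ('a \<Rightarrow> 'a) set" where
  "Der0 sc \<nu> = {D. Vector_Spaces.linear sc sc D \<and> (\<forall>x y. D (x * y) = D x * y + x * D y) \<and>
                   (\<forall>i. D (idemp \<nu> i) = 0)}"

definition Int0 :: "('k::field \<Rightarrow> 'a::ring_1 \<Rightarrow> 'a) \<Rightarrow> ((('v,'e) path \<Rightarrow> 'k) \<Rightarrow> 'a) \<Rightarrow> ('a \<Rightarrow> 'a) set" where
  "Int0 sc \<nu> = {(\<lambda>a. e * a - a * e) | e. e \<in> module.span sc (range (idemp \<nu>))}"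

text \<open>D represents theta_nu(f): D is the k-linear map with
  D(nu(u)) = f([gamma_y^{-1} u gamma_x]_I) nu(u) for every path u from x to y.  (In travel order,
  the closed walk gamma_y^{-1} u gamma_x is: gamma_x, then u, then gamma_y inverted.)\<close>
definition theta_rep :: "('e \<Rightarrow> 'v::finite) \<Rightarrow> ('e \<Rightarrow> 'v) \<Rightarrow> ('k::field \<Rightarrow> 'a::ring_1 \<Rightarrow> 'a) \<Rightarrow>
    ((('v,'e) path \<Rightarrow> 'k) \<Rightarrow> 'a) \<Rightarrow> ('v \<Rightarrow> ('v,'e) walk) \<Rightarrow> (('v,'e) walk set \<Rightarrow> 'k) \<Rightarrow>
    ('a \<Rightarrow> 'a) \<Rightarrow> bool" where
  "theta_rep src tgt sc \<nu> \<gamma> f D \<longleftrightarrow> Vector_Spaces.linear sc sc D \<and>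
     (\<forall>u. is_path src tgt u \<longrightarrow>
        D (\<nu> (pind u)) =
          sc (f (htpy_class src tgt (ker src tgt \<nu>)
                   (wcat (wcat (\<gamma> (fst u)) (path_walk u)) (winv (\<gamma> (snd (snd u)))))))
             (\<nu> (pind u)))"

definition algebra_basis :: "('k::field \<Rightarrow> 'a::ring_1 \<Rightarrow> 'a) \<Rightarrow> ((('v,'e) path \<Rightarrow> 'k) \<Rightarrow> 'a) \<Rightarrow>
    'a set \<Rightarrow> bool" where
  "algebra_basis sc \<nu> B \<longleftrightarrow>
     \<not> module.dependent sc B \<and> module.span sc B = UNIV \<and>
     (\<forall>b\<in>B. \<exists>i j. b = idemp \<nu> j * b * idemp \<nu> i) \<and>
     range (idemp \<nu>) \<subseteq> B \<and>
     (\<forall>b\<in>B - range (idemp \<nu>). b \<in> jacobson_radical)"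

definition diagonal_wrt :: "('k::field \<Rightarrow> 'a::ring_1 \<Rightarrow> 'a) \<Rightarrow> 'a set \<Rightarrow> ('a \<Rightarrow> 'a) \<Rightarrow> bool" where
  "diagonal_wrt sc B D \<longleftrightarrow> (\<forall>b\<in>B. \<exists>c. D b = sc c b)"

definition image_theta_diagonalizable :: "('e \<Rightarrow> 'v::finite) \<Rightarrow> ('e \<Rightarrow> 'v) \<Rightarrow>
    ('k::field \<Rightarrow> 'a::ring_1 \<Rightarrow> 'a) \<Rightarrow> ((('v,'e) path \<Rightarrow> 'k) \<Rightarrow> 'a) \<Rightarrow> 'v \<Rightarrow>
    ('v \<Rightarrow> ('v,'e) walk) \<Rightarrow> bool" where
  "image_theta_diagonalizable src tgt sc \<nu> x0 \<gamma> \<longleftrightarrow>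
     (\<exists>B. algebra_basis sc \<nu> B \<and>
        (\<forall>f \<in> hom (pi1 src tgt (ker src tgt \<nu>) x0) (kplus :: 'k monoid).
           \<forall>D. theta_rep src tgt sc \<nu> \<gamma> f D \<longrightarrow>
             (\<exists>\<delta> \<in> Der0 sc \<nu>. diagonal_wrt sc B \<delta> \<and> (\<lambda>a. D a - \<delta> a) \<in> Int0 sc \<nu>)))"

end

theory Submission
  imports Defs
begin


lemma is_path_append: "is_path src tgt (x, l1 @ l2, y) \<longleftrightarrow> (\<exists>z. is_path src tgt (x,l1,z) \<and> is_path src tgt (z,l2,y))"
  by (induction l1 arbitrary: x) auto

lemma is_walk_append: "is_walk src tgt (x, l1 @ l2, y) \<longleftrightarrow> (\<exists>z. is_walk src tgt (x,l1,z) \<and> is_walk src tgt (z,l2,y))"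
  by (induction l1 arbitrary: x) auto

lemma path_last: "is_path src tgt (x,l,y) \<Longrightarrow> l \<noteq> [] \<Longrightarrow> tgt (last l) = y"
proof (induction l arbitrary: x)
  case (Cons a l) then show ?case by (cases l) auto
qed simp

lemma path_walk_is_walk: "is_path src tgt p \<Longrightarrow> is_walk src tgt (path_walk p)"
proof -
  have "is_path src tgt (x,l,y) \<Longrightarrow> is_walk src tgt (x, map (\<lambda>a. (a, True)) l, y)" for x l y
    by (induction l arbitrary: x) (auto simp: step_src_def step_tgt_def)
  then show "is_path src tgt p \<Longrightarrow> is_walk src tgt (path_walk p)"
    by (cases p) (auto simp: path_walk_def)
qed

definition sinv :: "'e \<times> bool \<Rightarrow> 'e \<times> bool" where "sinv = (\<lambda>(a,b). (a, \<not> b))"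

lemma winv_alt: "winv w = (wend w, rev (map sinv (fst (snd w))), wstart w)"
  by (simp add: winv_def sinv_def wend_def wstart_def)

lemma walk_inv: "is_walk src tgt (x, l, y) \<Longrightarrow> is_walk src tgt (y, rev (map sinv l), x)"
proof (induction l arbitrary: x)
  case (Cons a l)
  then show ?case by (auto simp: is_walk_append sinv_def step_src_def step_tgt_def split: prod.splits)
qed simp

lemma sinv_sinv[simp]: "sinv (sinv s) = s" by (cases s) (simp add: sinv_def)
lemma sinv_comp[simp]: "sinv \<circ> sinv = id" by (rule ext) simp
lemma map_sinv_sinv[simp]: "map sinv (map sinv l) = l" by (induction l) auto

lemma cancel_core: "is_walk src tgt (s, l, t) \<Longrightarrow> htpy src tgt I (t, rev (map sinv l) @ l, t) (t, [], t)"
proof (induction l arbitrary: s)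
  case Nil then show ?case by (auto intro: htpy_refl)
next
  case (Cons st l)
  define m where "m = step_tgt src tgt st"
  have wl: "is_walk src tgt (m, l, t)" using Cons.prems by (simp add: m_def)
  have M: "htpy src tgt I (m, [sinv st, st], m) (m, [], m)"
  proof (cases st)
    case (Pair a b) then show ?thesis
      by (cases b) (auto simp: m_def sinv_def step_tgt_def intro: htpy_cancel_tgt htpy_cancel_src)
  qed
  have v: "is_walk src tgt (t, rev (map sinv l), m)" using walk_inv[OF wl] .
  have 1: "htpy src tgt I (wcat (t, rev (map sinv l), m) (m, [sinv st, st], m)) (wcat (t, rev (map sinv l), m) (m, [], m))"
    by (rule htpy_cat_left[OF M v]) (simp add: wend_def wstart_def)
  have 2: "htpy src tgt I (wcat (wcat (t, rev (map sinv l), m) (m, [sinv st, st], m)) (m, l, t))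
       (wcat (wcat (t, rev (map sinv l), m) (m, [], m)) (m, l, t))"
    by (rule htpy_cat_right[OF 1 wl]) (simp add: wend_def wstart_def wcat_def)
  have 3: "htpy src tgt I (t, rev (map sinv l) @ l, t) (t, [], t)" using Cons.IH[OF wl] .
  show ?case using htpy_trans[OF 2[simplified wcat_def, simplified] 3] by simp
qed




locale PP = vector_space sc for sc :: "'k::field \<Rightarrow> 'a::ring_1 \<Rightarrow> 'a" +
  fixes src tgt :: "'e \<Rightarrow> 'v::finite" and \<nu> :: "(('v,'e) path \<Rightarrow> 'k) \<Rightarrow> 'a"
  assumes sc_multL: "\<And>c x y. sc c (x*y) = sc c x * y"
    and sc_multR: "\<And>c x y. sc c (x*y) = x * sc c y"
    and pres: "presentation src tgt sc \<nu>"
begin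

lemma nu_add: "a \<in> kQ src tgt \<Longrightarrow> b \<in> kQ src tgt \<Longrightarrow> \<nu> (\<lambda>p. a p + b p) = \<nu> a + \<nu> b"
  using pres by (simp add: presentation_def algebra_map_kQ_def)
lemma nu_scale: "a \<in> kQ src tgt \<Longrightarrow> \<nu> (\<lambda>p. c * a p) = sc c (\<nu> a)"
  using pres by (simp add: presentation_def algebra_map_kQ_def)
lemma nu_mult: "a \<in> kQ src tgt \<Longrightarrow> b \<in> kQ src tgt \<Longrightarrow> \<nu> (kQ_mult src tgt a b) = \<nu> a * \<nu> b"
  using pres by (simp add: presentation_def algebra_map_kQ_def)
lemma nu_surj: "\<nu> ` kQ src tgt = UNIV"
  using pres by (simp add: presentation_def)
lemma adm: "admissible_ideal src tgt (ker src tgt \<nu>)"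
  using pres by (simp add: presentation_def ker_def)

lemma kQ_zero: "(\<lambda>p. 0::'k) \<in> kQ src tgt" by (simp add: kQ_def)
lemma nu_zero: "\<nu> (\<lambda>p. 0) = 0"
  using nu_scale[OF kQ_zero, of 0] by simp
lemma kQ_add: "(a::('v,'e) path \<Rightarrow> 'k) \<in> kQ src tgt \<Longrightarrow> b \<in> kQ src tgt \<Longrightarrow> (\<lambda>p. a p + b p) \<in> kQ src tgt"
proof -
  assume a: "a \<in> kQ src tgt" and b: "b \<in> kQ src tgt"
  have "{p. a p + b p \<noteq> 0} \<subseteq> {p. a p \<noteq> 0} \<union> {p. b p \<noteq> 0}" by auto
  then show ?thesis using a b by (auto simp: kQ_def intro: finite_subset)
qed
lemma kQ_scale: "(a::('v,'e) path \<Rightarrow> 'k) \<in> kQ src tgt \<Longrightarrow> (\<lambda>p. c * a p) \<in> kQ src tgt"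
proof -
  assume a: "a \<in> kQ src tgt"
  have "{p. c * a p \<noteq> 0} \<subseteq> {p. a p \<noteq> 0}" by auto
  then show ?thesis using a by (auto simp: kQ_def intro: finite_subset)
qed
lemma pind_kQ: "is_path src tgt u \<Longrightarrow> pind u \<in> kQ src tgt"
proof -
  assume "is_path src tgt u"
  moreover have "{p. pind u p \<noteq> (0::'k)} \<subseteq> {u}" by (auto simp: pind_def)
  ultimately show ?thesis by (auto simp: kQ_def pind_def intro: finite_subset)
qed

lemma nu_sum: "finite S \<Longrightarrow> (\<forall>s\<in>S. g s \<in> kQ src tgt) \<Longrightarrow>
   (\<lambda>p. \<Sum>s\<in>S. g s p) \<in> kQ src tgt \<and> \<nu> (\<lambda>p. \<Sum>s\<in>S. g s p) = (\<Sum>s\<in>S. \<nu> (g s))"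
proof (induction S rule: finite_induct)
  case empty then show ?case by (simp add: kQ_zero nu_zero)
next
  case (insert x F)
  then show ?case by (simp add: kQ_add nu_add)
qed

lemma kQ_path: "(a::('v,'e) path \<Rightarrow> 'k) \<in> kQ src tgt \<Longrightarrow> a p \<noteq> 0 \<Longrightarrow> is_path src tgt p"
  by (cases p) (auto simp: kQ_def)

lemma expansion: assumes a: "a \<in> kQ src tgt"
  shows "\<nu> a = (\<Sum>p\<in>psupp a. sc (a p) (\<nu> (pind p)))"
proof -
  have fin: "finite (psupp a)" using a by (simp add: kQ_def psupp_def)
  have eq: "a = (\<lambda>q. \<Sum>p\<in>psupp a. a p * pind p q)"
  proof
    fix q
    have "(\<Sum>p\<in>psupp a. a p * pind p q) = (\<Sum>p\<in>psupp a. if q = p then a p else 0)"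
      by (rule sum.cong) (auto simp: pind_def)
    also have "\<dots> = a q" using fin by (simp add: psupp_def)
    finally show "a q = (\<Sum>p\<in>psupp a. a p * pind p q)" by simp
  qed
  have k: "\<forall>s\<in>psupp a. (\<lambda>q. a s * pind s q) \<in> kQ src tgt"
    using a by (auto simp: psupp_def intro!: kQ_scale pind_kQ dest: kQ_path)
  have "\<nu> a = (\<Sum>s\<in>psupp a. \<nu> (\<lambda>q. a s * pind s q))"
    using nu_sum[OF fin k] eq by metis
  also have "\<dots> = (\<Sum>p\<in>psupp a. sc (a p) (\<nu> (pind p)))"
    using a by (intro sum.cong) (auto simp: psupp_def intro!: nu_scale pind_kQ dest: kQ_path)
  finally show ?thesis .
qed

definition P where "P = {\<nu> (pind u) | u. is_path src tgt u}"

lemma span_P: "span P = UNIV"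
proof -
  { fix y
    obtain a where a: "a \<in> kQ src tgt" "y = \<nu> a" using nu_surj by blast
    have "y \<in> span P" unfolding a(2) expansion[OF a(1)]
      using a(1) by (intro span_sum span_scale span_base) (auto simp: P_def psupp_def dest: kQ_path) }
  then show ?thesis by auto
qed

end



lemma pind_mult:
  fixes src tgt :: "'e \<Rightarrow> 'v"
  assumes u: "is_path src tgt (a1, l1, b1)" and v: "is_path src tgt (a2, l2, b2)"
  shows "kQ_mult src tgt (pind (a2, l2, b2)) (pind (a1, l1, b1)) =
     (if b1 = a2 then pind (a1, l1 @ l2, b2) else (\<lambda>p. 0::'k::comm_ring_1))"
proof
  fix p :: "('v,'e) path"
  obtain x as y where p: "p = (x, as, y)" by (cases p)
  let ?C = "(x,as,y) = (a1,l1@l2,b2) \<and> b1 = a2"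
  have T: "(let z = (if i = 0 then x else tgt (as ! (i - 1))) in
          pind (a1, l1, b1) (x, take i as, z) * pind (a2, l2, b2) (z, drop i as, y))
        = (if i = length l1 \<and> ?C then 1 else (0::'k))" if i: "i \<in> {0..length as}" for i
  proof (cases "i = length l1 \<and> ?C")
    case True
    then have as: "as = l1 @ l2" "x = a1" "y = b2" "b1 = a2" "i = length l1" by auto
    have z: "(if i = 0 then x else tgt (as ! (i - 1))) = b1"
    proof (cases "l1 = []")
      case True then show ?thesis using u as by simp
    next
      case False
      then have "as ! (i - 1) = last l1" using as by (simp add: last_conv_nth nth_append)
      then show ?thesis using path_last[OF u False] False as by simp
    qed
    show ?thesis using True as z by (simp add: Let_def pind_def)
  next
    case False
    have nn: "\<not> (pind (a1, l1, b1) (x, take i as, z) = (1::'k) \<and> pind (a2, l2, b2) (z, drop i as, y) = (1::'k))"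
      for z
    proof
      assume h: "pind (a1, l1, b1) (x, take i as, z) = (1::'k) \<and> pind (a2, l2, b2) (z, drop i as, y) = (1::'k)"
      then have e: "(x, take i as, z) = (a1, l1, b1)" "(z, drop i as, y) = (a2, l2, b2)"
        by (auto simp: pind_def split: if_splits)
      then have "as = l1 @ l2" by (metis append_take_drop_id prod.inject)
      moreover have "i = length l1" using e i by auto
      ultimately show False using False e by auto
    qed
    have "pind (a1, l1, b1) (x, take i as, z) * pind (a2, l2, b2) (z, drop i as, y) = (0::'k)" for z
      using nn[of z] unfolding pind_def by (auto split: if_splits)
    then show ?thesis using False by (simp add: Let_def)
  qed
  have "kQ_mult src tgt (pind (a2, l2, b2)) (pind (a1, l1, b1)) p =
     (\<Sum>i\<in>{0..length as}. if i = length l1 \<and> ?C then 1 else (0::'k))"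
    unfolding kQ_mult_def p by (simp only: prod.case) (rule sum.cong[OF refl T])
  also have "\<dots> = (if ?C then 1 else (0::'k))"
    by (cases ?C) (auto simp: sum.delta)
  finally have L: "kQ_mult src tgt (pind (a2, l2, b2)) (pind (a1, l1, b1)) p = (if ?C then 1 else (0::'k))"
    unfolding p .
  have R: "(if b1 = a2 then pind (a1, l1 @ l2, b2) else (\<lambda>p. 0::'k)) p = (if ?C then 1 else 0)"
    by (auto simp: p pind_def)
  show "kQ_mult src tgt (pind (a2, l2, b2)) (pind (a1, l1, b1)) p =
     (if b1 = a2 then pind (a1, l1 @ l2, b2) else (\<lambda>p. 0::'k)) p"
    unfolding L R by (rule refl)
qed




lemma walk_wcat: "is_walk src tgt v \<Longrightarrow> is_walk src tgt w \<Longrightarrow> wend v = wstart w \<Longrightarrow> is_walk src tgt (wcat v w)"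
  by (cases v; cases w) (auto simp: wcat_def wend_def wstart_def is_walk_append)

lemma wcat_start[simp]: "wstart (wcat v w) = wstart v" by (simp add: wcat_def wstart_def)
lemma wcat_end[simp]: "wend (wcat v w) = wend w" by (simp add: wcat_def wend_def)
lemma pw_start[simp]: "wstart (path_walk u) = fst u" by (simp add: path_walk_def wstart_def)
lemma pw_end[simp]: "wend (path_walk u) = snd (snd u)" by (simp add: path_walk_def wend_def)
lemma winv_start[simp]: "wstart (winv u) = wend u" by (simp add: winv_def wstart_def wend_def)
lemma winv_end[simp]: "wend (winv u) = wstart u" by (simp add: winv_def wstart_def wend_def)

lemma winv_walk: "is_walk src tgt w \<Longrightarrow> is_walk src tgt (winv w)"
  using walk_inv[of src tgt "fst w" "fst (snd w)" "snd (snd w)"] by (simp add: winv_alt wstart_def wend_def)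

context PP begin

lemma nu_mult_pind:
  assumes u: "is_path src tgt u" and v: "is_path src tgt v"
  shows "\<nu> (pind v) * \<nu> (pind u) = (if snd (snd u) = fst v
     then \<nu> (pind (fst u, fst (snd u) @ fst (snd v), snd (snd v))) else 0)"
proof -
  obtain a1 l1 b1 where U: "u = (a1,l1,b1)" by (cases u)
  obtain a2 l2 b2 where V: "v = (a2,l2,b2)" by (cases v)
  have "\<nu> (pind v) * \<nu> (pind u) = \<nu> (kQ_mult src tgt (pind v) (pind u))"
    using nu_mult[OF pind_kQ[OF v] pind_kQ[OF u]] by simp
  also have "\<dots> = (if b1 = a2 then \<nu> (pind (a1, l1 @ l2, b2)) else 0)"
    unfolding U V using pind_mult[of src tgt a1 l1 b1 a2 l2 b2, where 'k='k] u v U V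
    by (cases "b1 = a2") (simp_all add: nu_zero)
  finally show ?thesis using U V by simp
qed

lemma idemp_path: "is_path src tgt (x, [], x)" by simp

lemma ee: assumes p: "is_path src tgt p"
  shows "idemp \<nu> y * \<nu> (pind p) * idemp \<nu> x = (if fst p = x \<and> snd (snd p) = y then \<nu> (pind p) else 0)"
proof -
  obtain a l b where P: "p = (a,l,b)" by (cases p)
  show ?thesis
    using nu_mult_pind[OF p idemp_path[of y]] nu_mult_pind[OF idemp_path[of x] p] P
    by (auto simp: idemp_def)
qed

lemma minrel_uniform:
  assumes m: "minimal_relation (ker src tgt \<nu>) \<rho>" and u: "\<rho> u \<noteq> 0" and u': "\<rho> u' \<noteq> 0"
  shows "fst u = fst u' \<and> snd (snd u) = snd (snd u')"
proof -
  have rk: "\<rho> \<in> kQ src tgt" and r0: "\<nu> \<rho> = 0" using m by (auto simp: minimal_relation_def ker_def)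
  define x where "x = fst u"
  define y where "y = snd (snd u)"
  define S where "S = {p \<in> psupp \<rho>. fst p = x \<and> snd (snd p) = y}"
  define \<rho>' where "\<rho>' = (\<lambda>p. if p \<in> S then \<rho> p else 0)"
  have fin: "finite (psupp \<rho>)" using rk by (simp add: kQ_def psupp_def)
  have Ssub: "S \<subseteq> psupp \<rho>" by (auto simp: S_def)
  have sup: "psupp \<rho>' = S" by (auto simp: psupp_def \<rho>'_def S_def)
  have rk': "\<rho>' \<in> kQ src tgt"
  proof -
    have "finite {p. \<rho>' p \<noteq> 0}" using sup Ssub fin by (metis finite_subset psupp_def)
    moreover have "\<forall>p. \<not> is_path src tgt p \<longrightarrow> \<rho>' p = 0" using rk by (auto simp: kQ_def \<rho>'_def)
    ultimately show ?thesis by (simp add: kQ_def)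
  qed
  have "\<nu> \<rho>' = (\<Sum>p\<in>S. sc (\<rho> p) (\<nu> (pind p)))"
    unfolding expansion[OF rk'] sup by (rule sum.cong) (auto simp: \<rho>'_def)
  also have "\<dots> = (\<Sum>p\<in>psupp \<rho>. if fst p = x \<and> snd (snd p) = y then sc (\<rho> p) (\<nu> (pind p)) else 0)"
    unfolding S_def using fin by (rule sum.inter_filter)
  also have "\<dots> = (\<Sum>p\<in>psupp \<rho>. idemp \<nu> y * sc (\<rho> p) (\<nu> (pind p)) * idemp \<nu> x)"
  proof (rule sum.cong[OF refl])
    fix p assume "p \<in> psupp \<rho>"
    then have pp: "is_path src tgt p" using rk by (auto simp: psupp_def dest: kQ_path)
    have "idemp \<nu> y * sc (\<rho> p) (\<nu> (pind p)) * idemp \<nu> x = sc (\<rho> p) (idemp \<nu> y * \<nu> (pind p) * idemp \<nu> x)"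
      by (metis sc_multL sc_multR)
    then show "(if fst p = x \<and> snd (snd p) = y then sc (\<rho> p) (\<nu> (pind p)) else 0) =
      idemp \<nu> y * sc (\<rho> p) (\<nu> (pind p)) * idemp \<nu> x" using ee[OF pp, of y x] by simp
  qed
  also have "\<dots> = idemp \<nu> y * \<nu> \<rho> * idemp \<nu> x"
    unfolding expansion[OF rk] by (simp add: sum_distrib_left sum_distrib_right)
  also have "\<dots> = 0" using r0 by simp
  finally have "\<rho>' \<in> ker src tgt \<nu>" using rk' by (simp add: ker_def)
  moreover have "u \<in> S" using u by (simp add: S_def psupp_def x_def y_def)
  ultimately have "\<not> S \<subset> psupp \<rho>" using m unfolding minimal_relation_def \<rho>'_def by blast
  then have "S = psupp \<rho>" using Ssub by blast
  then have "u' \<in> S" using u' by (simp add: psupp_def)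
  then show ?thesis by (simp add: S_def x_def y_def)
qed

lemma htpy_inv: "htpy src tgt (ker src tgt \<nu>) w w' \<Longrightarrow>
   is_walk src tgt w \<and> is_walk src tgt w' \<and> wstart w = wstart w' \<and> wend w = wend w'"
proof (induction rule: htpy.induct)
  case (htpy_cancel_tgt \<alpha>)
  then show ?case by (simp add: step_src_def step_tgt_def wstart_def wend_def)
next
  case (htpy_cancel_src \<alpha>)
  then show ?case by (simp add: step_src_def step_tgt_def wstart_def wend_def)
next
  case (htpy_rel \<rho> u u')
  then show ?case using minrel_uniform[of \<rho> u u'] by (simp add: path_walk_is_walk)
next
  case (htpy_cat_left w w' v)
  then show ?case by (auto intro: walk_wcat)
next
  case (htpy_cat_right w w' v)
  then show ?case by (auto intro: walk_wcat)
qed auto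

end



locale PT = PP sc src tgt \<nu> for sc :: "'k::field \<Rightarrow> 'a::ring_1 \<Rightarrow> 'a"
  and src tgt :: "'e \<Rightarrow> 'v::finite" and \<nu> :: "(('v,'e) path \<Rightarrow> 'k) \<Rightarrow> 'a" +
  fixes T :: "'e set" and x0 :: 'v and \<gamma> :: "'v \<Rightarrow> ('v,'e) walk"
  assumes tw: "tree_walks src tgt T x0 \<gamma>"
begin

abbreviation "I \<equiv> ker src tgt \<nu>"
abbreviation "cls \<equiv> htpy_class src tgt I"
abbreviation "G \<equiv> pi1 src tgt I x0"

lemma gam: "is_walk src tgt (\<gamma> x)" "wstart (\<gamma> x) = x0" "wend (\<gamma> x) = x"
  using tw by (auto simp: tree_walks_def walk_in_def)

lemma cls_eq: "htpy src tgt I w w' \<Longrightarrow> cls w = cls w'"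
  unfolding htpy_class_def by (blast intro: htpy_sym htpy_trans)

lemma cls_mult:
  assumes c: "is_walk src tgt c0" and d: "is_walk src tgt d0" and e: "wend d0 = wstart c0"
  shows "monoid.mult G (cls c0) (cls d0) = cls (wcat d0 c0)"
proof -
  have "htpy src tgt I (wcat d0 c0) (wcat d c)" if hc: "htpy src tgt I c0 c" and hd: "htpy src tgt I d0 d" for c d
  proof -
    have 1: "htpy src tgt I (wcat d0 c0) (wcat d c0)" by (rule htpy_cat_right[OF hd c e])
    have "is_walk src tgt d" "wend d = wstart c0" using htpy_inv[OF hd] e by auto
    then have 2: "htpy src tgt I (wcat d c0) (wcat d c)" by (intro htpy_cat_left[OF hc])
    show ?thesis using htpy_trans[OF 1 2] .
  qed
  note X = this
  have "monoid.mult G (cls c0) (cls d0) = {w. \<exists>c\<in>cls c0. \<exists>d\<in>cls d0. htpy src tgt I (wcat d c) w}"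
    by (simp add: pi1_def)
  also have "\<dots> = cls (wcat d0 c0)"
  proof (rule Set.set_eqI, rule iffI)
    fix w assume "w \<in> {w. \<exists>c\<in>cls c0. \<exists>d\<in>cls d0. htpy src tgt I (wcat d c) w}"
    then obtain c d where "htpy src tgt I c0 c" "htpy src tgt I d0 d" "htpy src tgt I (wcat d c) w"
      unfolding htpy_class_def by blast
    then show "w \<in> cls (wcat d0 c0)" using X htpy_trans unfolding htpy_class_def by blast
  next
    fix w assume "w \<in> cls (wcat d0 c0)"
    then show "w \<in> {w. \<exists>c\<in>cls c0. \<exists>d\<in>cls d0. htpy src tgt I (wcat d c) w}"
      using htpy_refl[OF c] htpy_refl[OF d] unfolding htpy_class_def by blast
  qed
  finally show ?thesis .
qed

lemma cls_carrier: "is_walk src tgt w \<Longrightarrow> wstart w = x0 \<Longrightarrow> wend w = x0 \<Longrightarrow> cls w \<in> carrier G"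
  by (auto simp: pi1_def)

lemma f_one: assumes f: "f \<in> hom G (kplus :: 'k monoid)"
  shows "f (cls (x0, [], x0)) = 0"
proof -
  have w: "is_walk src tgt (x0, [], x0)" by simp
  have cc: "cls (x0, [], x0) \<in> carrier G" by (rule cls_carrier[OF w]) (auto simp: wstart_def wend_def)
  have "monoid.mult G (cls (x0, [], x0)) (cls (x0, [], x0)) = cls (x0, [], x0)"
    using cls_mult[OF w w] by (simp add: wcat_def wstart_def wend_def)
  moreover have "\<forall>x\<in>carrier G. \<forall>y\<in>carrier G. f (monoid.mult G x y) = f x + f y"
    using f by (simp add: hom_def kplus_def)
  ultimately have "f (cls (x0, [], x0)) = f (cls (x0, [], x0)) + f (cls (x0, [], x0))"
    using cc by metis
  then show ?thesis by (metis add_cancel_right_right)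
qed

definition Wc :: "('v,'e) path \<Rightarrow> ('v,'e) walk" where
  "Wc u = wcat (wcat (\<gamma> (fst u)) (path_walk u)) (winv (\<gamma> (snd (snd u))))"

lemma Wc_walk: "is_path src tgt u \<Longrightarrow> is_walk src tgt (Wc u) \<and> wstart (Wc u) = x0 \<and> wend (Wc u) = x0"
  unfolding Wc_def using gam
  by (auto intro!: walk_wcat winv_walk path_walk_is_walk)

lemma f_triv: assumes f: "f \<in> hom G (kplus :: 'k monoid)"
  shows "f (cls (Wc (x, [], x))) = 0"
proof -
  obtain s l t where g: "\<gamma> x = (s, l, t)" by (cases "\<gamma> x")
  have st: "s = x0" "t = x" using gam[of x] g by (auto simp: wstart_def wend_def)
  have "is_walk src tgt (t, rev (map sinv l), s)" using walk_inv gam(1)[of x] g by metis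
  from cancel_core[OF this, of I]
  have "htpy src tgt I (Wc (x, [], x)) (x0, [], x0)"
    by (simp add: Wc_def g st wcat_def path_walk_def winv_alt wstart_def wend_def rev_map)
  then show ?thesis using cls_eq f_one[OF f] by simp
qed

lemma f_add: assumes f: "f \<in> hom G (kplus :: 'k monoid)"
  and p: "is_path src tgt p" and q: "is_path src tgt q" and e: "snd (snd q) = fst p"
  shows "f (cls (Wc (fst q, fst (snd q) @ fst (snd p), snd (snd p)))) = f (cls (Wc p)) + f (cls (Wc q))"
proof -
  define g where "g = \<gamma> (fst p)"
  define A where "A = wcat (\<gamma> (fst q)) (path_walk q)"
  define B where "B = wcat (path_walk p) (winv (\<gamma> (snd (snd p))))"
  have gw: "is_walk src tgt g" and ge: "wend g = fst p" using gam by (auto simp: g_def)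
  obtain s l t where gs: "g = (s, l, t)" by (cases g)
  have mid: "htpy src tgt I (wcat (winv g) g) (wend g, [], wend g)"
    using cancel_core[of src tgt s l t I] gw gs by (simp add: winv_alt wcat_def wstart_def wend_def)
  have Aw: "is_walk src tgt A" "wend A = fst p"
    unfolding A_def using gam q e by (auto intro!: walk_wcat path_walk_is_walk)
  have Bw: "is_walk src tgt B" "wstart B = fst p"
    unfolding B_def using gam p by (auto intro!: walk_wcat path_walk_is_walk winv_walk)
  have 1: "htpy src tgt I (wcat A (wcat (winv g) g)) (wcat A (wend g, [], wend g))"
    by (rule htpy_cat_left[OF mid Aw(1)]) (simp add: Aw ge)
  have 2: "htpy src tgt I (wcat (wcat A (wcat (winv g) g)) B) (wcat (wcat A (wend g, [], wend g)) B)"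
    by (rule htpy_cat_right[OF 1 Bw(1)]) (simp add: Bw ge)
  have eq1: "wcat (wcat A (wcat (winv g) g)) B = wcat (Wc q) (Wc p)"
    by (simp add: A_def B_def Wc_def g_def wcat_def e)
  have eq2: "wcat (wcat A (wend g, [], wend g)) B = Wc (fst q, fst (snd q) @ fst (snd p), snd (snd p))"
    by (simp add: A_def B_def Wc_def g_def wcat_def path_walk_def)
  have h: "htpy src tgt I (wcat (Wc q) (Wc p)) (Wc (fst q, fst (snd q) @ fst (snd p), snd (snd p)))"
    using 2 eq1 eq2 by simp
  have Wp: "is_walk src tgt (Wc p)" "wstart (Wc p) = x0" "wend (Wc p) = x0" using Wc_walk[OF p] by auto
  have Wq: "is_walk src tgt (Wc q)" "wstart (Wc q) = x0" "wend (Wc q) = x0" using Wc_walk[OF q] by auto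
  have "monoid.mult G (cls (Wc p)) (cls (Wc q)) = cls (wcat (Wc q) (Wc p))"
    using cls_mult[OF Wp(1) Wq(1)] Wp Wq by simp
  also have "\<dots> = cls (Wc (fst q, fst (snd q) @ fst (snd p), snd (snd p)))" using cls_eq[OF h] .
  finally have "f (cls (Wc (fst q, fst (snd q) @ fst (snd p), snd (snd p)))) = f (monoid.mult G (cls (Wc p)) (cls (Wc q)))" by simp
  also have "\<dots> = f (cls (Wc p)) + f (cls (Wc q))"
  proof -
    have "\<forall>x\<in>carrier G. \<forall>y\<in>carrier G. f (monoid.mult G x y) = f x + f y"
      using f by (simp add: hom_def kplus_def)
    then show ?thesis using cls_carrier[OF Wp] cls_carrier[OF Wq] by blast
  qed
  finally show ?thesis .
qed

end



lemma geom_ring: "(\<Sum>i<n. (x::'a::ring_1) ^ i) * (1 - x) = 1 - x ^ n"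
proof (induction n)
  case (Suc n)
  have "(\<Sum>i<Suc n. x ^ i) * (1 - x) = (\<Sum>i<n. x ^ i) * (1 - x) + x ^ n * (1 - x)"
    by (simp add: distrib_right)
  also have "\<dots> = 1 - x ^ n + (x ^ n - x ^ n * x)" using Suc.IH by (simp add: right_diff_distrib)
  also have "\<dots> = 1 - x ^ Suc n" by (simp add: power_Suc2 power_commutes)
  finally show ?case .
qed simp

context PP begin

lemma span_bi:
  assumes R1: "\<And>y. subspace {x. R x y}" and R2: "\<And>x. subspace {y. R x y}"
    and gen: "\<And>s t. s \<in> S \<Longrightarrow> t \<in> T \<Longrightarrow> R s t"
    and x: "x \<in> span S" and y: "y \<in> span T"
  shows "R x y"
proof -
  have g: "R s y" if s: "s \<in> S" for s
    using y by (induction rule: span_induct) (auto intro: R2 gen[OF s])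
  show ?thesis using x by (induction rule: span_induct) (auto intro: R1 g)
qed

lemma span_mult:
  assumes gen: "\<And>s t. s \<in> S \<Longrightarrow> t \<in> T \<Longrightarrow> s * t \<in> span U"
    and x: "x \<in> span S" and y: "y \<in> span T"
  shows "x * y \<in> span U"
proof (rule span_bi[where R = "\<lambda>x y. x * y \<in> span U", OF _ _ gen x y])
  fix y show "subspace {x. x * y \<in> span U}"
    unfolding subspace_def by (auto simp: distrib_right span_zero span_add sc_multL[symmetric] span_scale)
next
  fix x show "subspace {y. x * y \<in> span U}"
    unfolding subspace_def by (auto simp: distrib_left span_zero span_add sc_multR[symmetric] span_scale)
qed

definition Jn :: "nat \<Rightarrow> 'a set" where
  "Jn n = span {\<nu> (pind p) | p. is_path src tgt p \<and> n \<le> path_len p}"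

lemma J_mult: "x \<in> Jn m \<Longrightarrow> y \<in> Jn n \<Longrightarrow> x * y \<in> Jn (m + n)"
  unfolding Jn_def
proof (rule span_mult)
  fix s t assume s: "s \<in> {\<nu> (pind p) | p. is_path src tgt p \<and> m \<le> path_len p}"
    and t: "t \<in> {\<nu> (pind p) | p. is_path src tgt p \<and> n \<le> path_len p}"
  then obtain p q where pq: "s = \<nu> (pind p)" "is_path src tgt p" "m \<le> path_len p"
    "t = \<nu> (pind q)" "is_path src tgt q" "n \<le> path_len q" by blast
  show "s * t \<in> span {\<nu> (pind p) | p. is_path src tgt p \<and> m + n \<le> path_len p}"
  proof (cases "snd (snd q) = fst p")
    case True
    define r where "r = (fst q, fst (snd q) @ fst (snd p), snd (snd p))"
    have "is_path src tgt r"
      using pq True unfolding r_def by (cases p; cases q) (auto simp: is_path_append)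
    moreover have "m + n \<le> path_len r" using pq by (simp add: r_def path_len_def)
    ultimately have "\<nu> (pind r) \<in> {\<nu> (pind p) | p. is_path src tgt p \<and> m + n \<le> path_len p}" by blast
    then show ?thesis using nu_mult_pind[OF pq(5) pq(2)] pq True
      by (simp add: span_base r_def)
  next
    case False then show ?thesis using nu_mult_pind[OF pq(5) pq(2)] pq by (simp add: span_zero)
  qed
qed

lemma J0: "Jn 0 = UNIV"
  unfolding Jn_def using span_P by (simp add: P_def)

lemma N_exists: "\<exists>N. \<forall>x \<in> Jn N. x = 0"
proof -
  obtain N where N: "arrow_ideal_pow src tgt N \<subseteq> ker src tgt \<nu>"
    using adm by (auto simp: admissible_ideal_def)
  have "{\<nu> (pind p) | p. is_path src tgt p \<and> N \<le> path_len p} \<subseteq> {0}"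
  proof
    fix z assume "z \<in> {\<nu> (pind p) | p. is_path src tgt p \<and> N \<le> path_len p}"
    then obtain p where p: "z = \<nu> (pind p)" "is_path src tgt p" "N \<le> path_len p" by blast
    have "pind p \<in> arrow_ideal_pow src tgt N"
      using p pind_kQ[OF p(2)] by (auto simp: arrow_ideal_pow_def pind_def)
    then show "z \<in> {0}" using N p by (auto simp: ker_def)
  qed
  then have "Jn N \<subseteq> span {0}" unfolding Jn_def by (rule span_mono)
  then show ?thesis by auto
qed

lemma pow_J: "x \<in> Jn 1 \<Longrightarrow> x ^ k \<in> Jn k"
proof (induction k)
  case 0 then show ?case using J0 by simp
next
  case (Suc k) then show ?case using J_mult[of x 1 "x ^ k" k] by simp
qed

end


context PP begin
lemma jac:
  assumes u: "is_path src tgt u" "1 \<le> path_len u"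
  shows "\<nu> (pind u) \<in> jacobson_radical"
proof -
  let ?b = "\<nu> (pind u)"
  obtain N where N: "\<forall>x \<in> Jn N. x = 0" using N_exists by blast
  have bJ: "?b \<in> Jn 1" unfolding Jn_def by (rule span_base) (use u in blast)
  have abJ: "a * ?b \<in> Jn 1" for a using J_mult[of a 0 ?b 1] bJ J0 by simp
  have "?b \<in> L" if L: "maximal_left_ideal L" for L
  proof (rule ccontr)
    assume nb: "?b \<notin> L"
    have li: "left_ideal L" "L \<noteq> UNIV" "\<And>L'. left_ideal L' \<Longrightarrow> L \<subseteq> L' \<Longrightarrow> L' = L \<or> L' = UNIV"
      using L by (auto simp: maximal_left_ideal_def)
    define L' where "L' = {l + a * ?b | l a. l \<in> L}"
    have "left_ideal L'"
      unfolding left_ideal_def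
    proof (intro conjI allI ballI impI)
      have "(0::'a) = 0 + 0 * ?b \<and> (0::'a) \<in> L" using li(1) by (simp add: left_ideal_def)
      then show "0 \<in> L'" unfolding L'_def by blast
    next
      fix x y assume "x \<in> L'" "y \<in> L'"
      then obtain l1 a1 l2 a2 where "x = l1 + a1 * ?b" "l1 \<in> L" "y = l2 + a2 * ?b" "l2 \<in> L"
        unfolding L'_def by blast
      moreover have "x + y = (l1 + l2) + (a1 + a2) * ?b" using calculation by (simp add: algebra_simps)
      moreover have "l1 + l2 \<in> L" using li(1) calculation by (simp add: left_ideal_def)
      ultimately show "x + y \<in> L'" unfolding L'_def by blast
    next
      fix x assume "x \<in> L'"
      then obtain l1 a1 where "x = l1 + a1 * ?b" "l1 \<in> L"
        unfolding L'_def by blast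
      moreover have "- x = (- l1) + (- a1) * ?b" using calculation by simp
      moreover have "- l1 \<in> L" using li(1) calculation by (simp add: left_ideal_def)
      ultimately show "- x \<in> L'" unfolding L'_def by blast
    next
      fix r x assume "x \<in> L'"
      then obtain l1 a1 where "x = l1 + a1 * ?b" "l1 \<in> L"
        unfolding L'_def by blast
      moreover have "r * x = (r * l1) + (r * a1) * ?b" using calculation by (simp add: distrib_left mult.assoc)
      moreover have "r * l1 \<in> L" using li(1) calculation by (simp add: left_ideal_def)
      ultimately show "r * x \<in> L'" unfolding L'_def by blast
    qed
    moreover have "L \<subseteq> L'"
    proof
      fix l assume "l \<in> L" then have "l = l + 0 * ?b \<and> l \<in> L" by simp
      then show "l \<in> L'" unfolding L'_def by blast
    qed
    ultimately have "L' = L \<or> L' = UNIV" using li(3) by blast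
    moreover have "?b \<in> L'"
    proof -
      have "?b = 0 + 1 * ?b \<and> (0::'a) \<in> L" using li(1) by (simp add: left_ideal_def)
      then show ?thesis unfolding L'_def by blast
    qed
    ultimately have "L' = UNIV" using nb by auto
    then obtain l a where la: "1 = l + a * ?b" "l \<in> L" unfolding L'_def by blast
    define x where "x = a * ?b"
    have "x ^ N = 0" using N pow_J[of x N] abJ by (simp add: x_def)
    moreover have "l = 1 - x" using la by (simp add: x_def algebra_simps)
    ultimately have "(\<Sum>i<N. x ^ i) * l = 1" using geom_ring[of x N] by simp
    then have one: "1 \<in> L" using la(2) li(1) by (metis left_ideal_def)
    have "r \<in> L" for r using li(1) one by (metis left_ideal_def mult.right_neutral)
    then show False using li(2) by auto
  qed
  then show ?thesis by (auto simp: jacobson_radical_def)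
qed

end


context PP begin

lemma idemp_indep: "\<not> dependent (range (idemp \<nu>))"
proof
  assume "dependent (range (idemp \<nu>))"
  then obtain t u w where t: "finite t" "t \<subseteq> range (idemp \<nu>)" "(\<Sum>v\<in>t. sc (u v) v) = 0"
    and w: "w \<in> t" "u w \<noteq> 0"
    unfolding dependent_explicit by blast
  define r where "r v = (SOME x. idemp \<nu> x = v)" for v
  have r: "idemp \<nu> (r v) = v" if "v \<in> t" for v
  proof -
    have "\<exists>x. idemp \<nu> x = v" using that t(2) by blast
    then show ?thesis unfolding r_def by (rule someI_ex)
  qed
  define g where "g v = (\<lambda>q. u v * pind (r v, [] :: 'e list, r v) q)" for v
  have gk: "\<forall>v\<in>t. g v \<in> kQ src tgt" unfolding g_def by (auto intro!: kQ_scale pind_kQ)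
  note ns = nu_sum[OF t(1) gk]
  have "\<nu> (\<lambda>p. \<Sum>v\<in>t. g v p) = (\<Sum>v\<in>t. \<nu> (g v))" using ns by blast
  also have "\<dots> = (\<Sum>v\<in>t. sc (u v) v)"
  proof (rule sum.cong[OF refl])
    fix v assume v: "v \<in> t"
    have "\<nu> (g v) = sc (u v) (\<nu> (pind (r v, [], r v)))"
      unfolding g_def by (rule nu_scale) (rule pind_kQ, simp)
    also have "\<dots> = sc (u v) v" using r[OF v] by (simp add: idemp_def)
    finally show "\<nu> (g v) = sc (u v) v" .
  qed
  finally have "(\<lambda>p. \<Sum>v\<in>t. g v p) \<in> ker src tgt \<nu>" using t(3) ns by (simp add: ker_def)
  then have "(\<lambda>p. \<Sum>v\<in>t. g v p) \<in> arrow_ideal_pow src tgt 2" using adm by (auto simp: admissible_ideal_def)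
  then have "(\<Sum>v\<in>t. g v (r w, [], r w)) = 0" by (auto simp: arrow_ideal_pow_def path_len_def)
  moreover have "(\<Sum>v\<in>t. g v (r w, [], r w)) = (\<Sum>v\<in>t. if v = w then u v else 0)"
  proof (rule sum.cong[OF refl])
    fix v assume v: "v \<in> t"
    have "r v = r w \<longleftrightarrow> v = w" using r[OF v] r[OF w(1)] by metis
    then show "g v (r w, [], r w) = (if v = w then u v else 0)" by (auto simp: g_def pind_def)
  qed
  moreover have "(\<Sum>v\<in>t. if v = w then u v else 0) = u w" using w(1) t(1) by simp
  ultimately show False using w(2) by simp
qed

end


context PT begin

lemma Dg_lem:
  assumes th: "theta_rep src tgt sc \<nu> \<gamma> f D" and u: "is_path src tgt u"
  shows "D (\<nu> (pind u)) = sc (f (cls (Wc u))) (\<nu> (pind u))"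
  using th u unfolding theta_rep_def Wc_def by blast

lemma D_der:
  assumes f: "f \<in> hom G (kplus :: 'k monoid)" and th: "theta_rep src tgt sc \<nu> \<gamma> f D"
  shows "D \<in> Der0 sc \<nu>"
proof -
  have lin: "Vector_Spaces.linear sc sc D" using th by (simp add: theta_rep_def)
  interpret Dl: Vector_Spaces.linear sc sc D by (rule lin)
  have Dg: "D (\<nu> (pind u)) = sc (f (cls (Wc u))) (\<nu> (pind u))" if "is_path src tgt u" for u
    using Dg_lem[OF th that] .
  have der: "D (x * y) = D x * y + x * D y" for x y
  proof (rule span_bi[where R = "\<lambda>x y. D (x * y) = D x * y + x * D y" and S = P and T = P])
    fix y show "subspace {x. D (x * y) = D x * y + x * D y}"
      unfolding subspace_def
    proof (intro conjI ballI allI)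
      fix x1 x2 assume "x1 \<in> {x. D (x * y) = D x * y + x * D y}" "x2 \<in> {x. D (x * y) = D x * y + x * D y}"
      then show "x1 + x2 \<in> {x. D (x * y) = D x * y + x * D y}"
        by (simp add: distrib_right Dl.add algebra_simps)
    next
      fix c x1 assume "x1 \<in> {x. D (x * y) = D x * y + x * D y}"
      then show "sc c x1 \<in> {x. D (x * y) = D x * y + x * D y}"
        by (simp add: sc_multL[symmetric] Dl.scale scale_right_distrib)
    qed simp
  next
    fix x show "subspace {y. D (x * y) = D x * y + x * D y}"
      unfolding subspace_def
    proof (intro conjI ballI allI)
      fix x1 x2 assume "x1 \<in> {y. D (x * y) = D x * y + x * D y}" "x2 \<in> {y. D (x * y) = D x * y + x * D y}"
      then show "x1 + x2 \<in> {y. D (x * y) = D x * y + x * D y}"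
        by (simp add: distrib_left Dl.add algebra_simps)
    next
      fix c x1 assume "x1 \<in> {y. D (x * y) = D x * y + x * D y}"
      then show "sc c x1 \<in> {y. D (x * y) = D x * y + x * D y}"
        by (simp add: sc_multR[symmetric] Dl.scale scale_right_distrib)
    qed simp
  next
    fix s t assume "s \<in> P" "t \<in> P"
    then obtain p q where pq: "s = \<nu> (pind p)" "is_path src tgt p" "t = \<nu> (pind q)" "is_path src tgt q"
      unfolding P_def by blast
    show "D (s * t) = D s * t + s * D t"
    proof (cases "snd (snd q) = fst p")
      case True
      define r where "r = (fst q, fst (snd q) @ fst (snd p), snd (snd p))"
      have rp: "is_path src tgt r"
        using pq True unfolding r_def by (cases p; cases q) (auto simp: is_path_append)
      have st: "s * t = \<nu> (pind r)" using nu_mult_pind[OF pq(4) pq(2)] pq True by (simp add: r_def)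
      have "D (s * t) = sc (f (cls (Wc r))) (s * t)" using Dg[OF rp] st by simp
      also have "\<dots> = sc (f (cls (Wc p)) + f (cls (Wc q))) (s * t)"
        using f_add[OF f pq(2) pq(4) True] by (simp add: r_def)
      also have "\<dots> = sc (f (cls (Wc p))) (s * t) + sc (f (cls (Wc q))) (s * t)"
        by (rule scale_left_distrib)
      also have "\<dots> = sc (f (cls (Wc p))) s * t + s * sc (f (cls (Wc q))) t"
        by (simp only: sc_multL[of "f (cls (Wc p))" s t] sc_multR[of "f (cls (Wc q))" s t])
      also have "\<dots> = D s * t + s * D t" using Dg pq by simp
      finally show ?thesis .
    next
      case False
      have st: "s * t = 0" using nu_mult_pind[OF pq(4) pq(2)] pq False by simp
      have "D s * t = sc (f (cls (Wc p))) (s * t)" using Dg pq by (simp add: sc_multL)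
      moreover have "s * D t = sc (f (cls (Wc q))) (s * t)" using Dg pq by (simp add: sc_multR)
      ultimately have "D s * t + s * D t = sc (f (cls (Wc p))) (s * t) + sc (f (cls (Wc q))) (s * t)"
        by simp
      then show ?thesis using st by simp
    qed
  qed (simp_all add: span_P)
  have "D (idemp \<nu> i) = 0" for i
    using Dg[of "(i, [], i)"] f_triv[OF f, of i] by (simp add: idemp_def)
  then show ?thesis using lin der by (simp add: Der0_def)
qed

lemma main: "image_theta_diagonalizable src tgt sc \<nu> x0 \<gamma>"
proof -
  have sub: "range (idemp \<nu>) \<subseteq> P" unfolding P_def idemp_def by fastforce
  obtain B where B: "range (idemp \<nu>) \<subseteq> B" "B \<subseteq> P" "independent B" "P \<subseteq> span B"
    using maximal_independent_subset_extend[OF sub idemp_indep] by blast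
  have "UNIV \<subseteq> span B" using span_mono[OF B(4)] span_P by (simp add: span_span)
  then have spB: "span B = UNIV" by auto
  have ab: "algebra_basis sc \<nu> B"
    unfolding algebra_basis_def
  proof (intro conjI ballI)
    show "\<not> dependent B" by (rule B(3))
    show "span B = UNIV" by (rule spB)
    show "range (idemp \<nu>) \<subseteq> B" by (rule B(1))
  next
    fix b assume "b \<in> B"
    then obtain u where u: "b = \<nu> (pind u)" "is_path src tgt u" using B(2) unfolding P_def by blast
    show "\<exists>i j. b = idemp \<nu> j * b * idemp \<nu> i"
      using ee[OF u(2), of "snd (snd u)" "fst u"] u by metis
  next
    fix b assume b: "b \<in> B - range (idemp \<nu>)"
    then obtain u where u: "b = \<nu> (pind u)" "is_path src tgt u" using B(2) unfolding P_def by blast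
    obtain x l y where U: "u = (x, l, y)" by (cases u)
    have "l \<noteq> []"
    proof
      assume "l = []"
      then have "b = idemp \<nu> x" using u U by (simp add: idemp_def)
      then show False using b by auto
    qed
    then have "1 \<le> path_len u" using U by (cases l) (auto simp: path_len_def)
    then show "b \<in> jacobson_radical" using jac[OF u(2)] u by simp
  qed
  show ?thesis
    unfolding image_theta_diagonalizable_def
  proof (intro exI[of _ B] conjI ballI allI impI)
    show "algebra_basis sc \<nu> B" by (rule ab)
  next
    fix f :: "('v,'e) walk set \<Rightarrow> 'k" and D
    assume f: "f \<in> hom G kplus" and th: "theta_rep src tgt sc \<nu> \<gamma> f D"
    show "\<exists>\<delta>\<in>Der0 sc \<nu>. diagonal_wrt sc B \<delta> \<and> (\<lambda>a. D a - \<delta> a) \<in> Int0 sc \<nu>"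
    proof (intro bexI[of _ D] conjI)
      show "D \<in> Der0 sc \<nu>" by (rule D_der[OF f th])
      show "diagonal_wrt sc B D"
        unfolding diagonal_wrt_def
      proof
        fix b assume "b \<in> B"
        then obtain u where u: "b = \<nu> (pind u)" "is_path src tgt u" using B(2) unfolding P_def by blast
        then show "\<exists>c. D b = sc c b" using Dg_lem[OF th u(2)] by blast
      qed
      have "(\<lambda>a. D a - D a) = (\<lambda>a. 0 * a - a * 0)" by simp
      then show "(\<lambda>a. D a - D a) \<in> Int0 sc \<nu>" unfolding Int0_def using span_zero by blast
    qed
  qed
qed

end

theorem proposition2p4:
  fixes src tgt :: "'e::finite \<Rightarrow> 'v::finite"
    and sc :: "'k::alg_closed_field \<Rightarrow> 'a::ring_1 \<Rightarrow> 'a"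
    and \<nu> :: "(('v,'e) path \<Rightarrow> 'k) \<Rightarrow> 'a"
    and T :: "'e set" and x0 :: 'v and \<gamma> :: "'v \<Rightarrow> ('v,'e) walk"
  assumes "k_algebra sc"
    and "finite_dimensional sc"
    and "connected_algebra TYPE('a)"
    and "no_oriented_cycles src tgt"
    and "presentation src tgt sc \<nu>"
    and "maximal_tree src tgt T"
    and "tree_walks src tgt T x0 \<gamma>"
  shows "image_theta_diagonalizable src tgt sc \<nu> x0 \<gamma>"
proof -
  have vs: "vector_space sc" and mm: "\<forall>c x y. sc c (x * y) = sc c x * y \<and> sc c (x * y) = x * sc c y"
    using assms(1) unfolding k_algebra_def by blast+
  have m: "\<And>c x y. sc c (x * y) = sc c x * y" "\<And>c x y. sc c (x * y) = x * sc c y"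
    using mm by blast+
  interpret PT sc src tgt \<nu> T x0 \<gamma>
    using vs m assms(5) assms(7) by (simp add: PT_def PP_def PT_axioms_def PP_axioms_def)
  show ?thesis by (rule main)
qed


end
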